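(* Let $\mathbb{F}$ be a field and $(\mathcal{C},f,m)$ a Floer triple over $\mathbb{F}$. Then the associated bidirect system of chain complexes $(CM,p,i,\partial)$, indexed by $A=B=(\mathbb{R},\le)$, is tame; i.e. the maps $\mu_a$ ($a\in\mathbb{R}$), $\nu^b$ ($b\in\mathbb{R}$) and $\mu$ are isomorphisms.
   Context: A Floer triple $(\mathcal{C},f,m)$ over a field $\mathbb{F}$: a set $\mathcal{C}$, $f\colon\mathcal{C}\to\mathbb{R}$, $m\colon\mathcal{C}\times\mathcal{C}\to\mathbb{F}$ with (i) $\mathcal{C}_a^b=\{c: a\le f(c)\le b\}$ finite for all $a\le b$; (ii) $m(c_1,c_2)\ne0\Rightarrow f(c_1)<f(c_2)$; (iii) $\sum_{c_2}m(c_1,c_2)m(c_2,c_3)=0$ for all $c_1,c_3$. $CM_a^b$ is the $\mathbb{F}$-vector space with basis $\mathcal{C}_a^b$ (zero if $a>b$), $\partial_a^b c=\sum_{c'\in\mathcal{C}_a^b}m(c',c)c'$, $HM_a^b$ its homology. For $a_1\le a_2$, $p^b_{a_2,a_1}\colon CM^b_{a_1}\to CM^b_{a_2}$ sends $c\mapsto c$ if $f(c)\ge a_2$ and $c\mapsto0$ otherwise; for $b_1\le b_2$, $i_a^{b_2,b_1}$ is the inclusion $CM_a^{b_1}\to CM_a^{b_2}$. Limits: $\varprojlim_a$ of a system with maps $X_{a_1}\to X_{a_2}$ ($a_1\le a_2$) = compatible families; $\varinjlim_b$ of a system with maps $X^{b_1}\to X^{b_2}$ = direct sum modulo identifying elements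 with their images. Let $L^b=\varprojlim_a CM_a^b$ (w.r.t. $p^b$) and $D_a=\varinjlim_b CM_a^b$ (w.r.t. $i_a$), chain complexes, with canonical maps $i_a^b\colon CM_a^b\to D_a$. Define $\mu_a\colon\varinjlim_b HM_a^b\to H(D_a)$ induced by $[x]\mapsto[i_a^bx]$; $\mu\colon\varinjlim_b H(L^b)\to H(\varinjlim_b L^b)$ induced by the canonical maps $L^b\to\varinjlim_b L$; $\nu^b\colon H(L^b)\to\varprojlim_a HM_a^b$, $[(x_a)_a]\mapsto([x_a])_a$. *)

theory Defs
  imports Main "HOL.Real"
begin

definition Cab :: "'c set \<Rightarrow> ('c \<Rightarrow> real) \<Rightarrow> real \<Rightarrow> real \<Rightarrow> 'c set" where
  "Cab C f a b = {c \<in> C. a \<le> f c \<and> f c \<le> b}"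

definition floer_triple :: "'c set \<Rightarrow> ('c \<Rightarrow> real) \<Rightarrow> ('c \<Rightarrow> 'c \<Rightarrow> 'k::field) \<Rightarrow> bool" where
  "floer_triple C f m \<longleftrightarrow>
     (\<forall>a b. a \<le> b \<longrightarrow> finite (Cab C f a b)) \<and>
     (\<forall>c1\<in>C. \<forall>c2\<in>C. m c1 c2 \<noteq> 0 \<longrightarrow> f c1 < f c2) \<and>
     (\<forall>c1\<in>C. \<forall>c3\<in>C.
        (\<Sum>c2\<in>{c2\<in>C. m c1 c2 * m c2 c3 \<noteq> 0}. m c1 c2 * m c2 c3) = 0)"

section \<open>The Morse complexes CM_a^b (chains = finitely supported coefficient functions)\<close>

definition CM :: "'c set \<Rightarrow> ('c \<Rightarrow> real) \<Rightarrow> real \<Rightarrow> real \<Rightarrow> ('c \<Rightarrow> 'k::zero) set" where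
  "CM C f a b = {x. \<forall>c. x c \<noteq> 0 \<longrightarrow> c \<in> Cab C f a b}"

definition bd :: "'c set \<Rightarrow> ('c \<Rightarrow> real) \<Rightarrow> ('c \<Rightarrow> 'c \<Rightarrow> 'k::field) \<Rightarrow> real \<Rightarrow> real
    \<Rightarrow> ('c \<Rightarrow> 'k) \<Rightarrow> ('c \<Rightarrow> 'k)" where
  "bd C f m a b x = (\<lambda>c'. if c' \<in> Cab C f a b then (\<Sum>c\<in>Cab C f a b. m c' c * x c) else 0)"

definition prj :: "('c \<Rightarrow> real) \<Rightarrow> real \<Rightarrow> ('c \<Rightarrow> 'k::zero) \<Rightarrow> ('c \<Rightarrow> 'k)" where
  "prj f a2 x = (\<lambda>c. if a2 \<le> f c then x c else 0)"

definition csub :: "('c \<Rightarrow> 'k::ab_group_add) \<Rightarrow> ('c \<Rightarrow> 'k) \<Rightarrow> ('c \<Rightarrow> 'k)" where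
  "csub x y = (\<lambda>c. x c - y c)"

definition cycles :: "'v set \<Rightarrow> ('v \<Rightarrow> 'v) \<Rightarrow> 'v \<Rightarrow> 'v set" where
  "cycles V d z0 = {x \<in> V. d x = z0}"

definition hclass :: "'v set \<Rightarrow> ('v \<Rightarrow> 'v) \<Rightarrow> 'v \<Rightarrow> ('v \<Rightarrow> 'v \<Rightarrow> 'v) \<Rightarrow> 'v \<Rightarrow> 'v set" where
  "hclass V d z0 sub z = {z' \<in> cycles V d z0. sub z' z \<in> d ` V}"

definition homology :: "'v set \<Rightarrow> ('v \<Rightarrow> 'v) \<Rightarrow> 'v \<Rightarrow> ('v \<Rightarrow> 'v \<Rightarrow> 'v) \<Rightarrow> 'v set set" where
  "homology V d z0 sub = hclass V d z0 sub ` cycles V d z0"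

text \<open>Map induced on homology by a chain map g; the complex parameters are those of the target.\<close>
definition hmap :: "'w set \<Rightarrow> ('w \<Rightarrow> 'w) \<Rightarrow> 'w \<Rightarrow> ('w \<Rightarrow> 'w \<Rightarrow> 'w) \<Rightarrow> ('v \<Rightarrow> 'w)
    \<Rightarrow> 'v set \<Rightarrow> 'w set" where
  "hmap W d z0 sub g c = hclass W d z0 sub (g (SOME z. z \<in> c))"

text \<open>Direct limit of a system X b with maps phi b1 b2 : X b1 -> X b2 (b1 <= b2),
  as equivalence classes of pairs (b, x), x in X b.\<close>
definition dl_class :: "(real \<Rightarrow> 'x set) \<Rightarrow> (real \<Rightarrow> real \<Rightarrow> 'x \<Rightarrow> 'x) \<Rightarrow> real \<Rightarrow> 'x
    \<Rightarrow> (real \<times> 'x) set" where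
  "dl_class X \<phi> b x = {(b', x'). x' \<in> X b' \<and>
      (\<exists>b''. b \<le> b'' \<and> b' \<le> b'' \<and> \<phi> b b'' x = \<phi> b' b'' x')}"

definition dlim :: "(real \<Rightarrow> 'x set) \<Rightarrow> (real \<Rightarrow> real \<Rightarrow> 'x \<Rightarrow> 'x) \<Rightarrow> (real \<times> 'x) set set" where
  "dlim X \<phi> = {dl_class X \<phi> b x | b x. x \<in> X b}"

definition dl_rep :: "(real \<times> 'x) set \<Rightarrow> real \<times> 'x" where
  "dl_rep \<xi> = (SOME p. p \<in> \<xi>)"

definition dl_map :: "(real \<Rightarrow> 'x set) \<Rightarrow> (real \<Rightarrow> real \<Rightarrow> 'x \<Rightarrow> 'x) \<Rightarrow> (real \<Rightarrow> 'x \<Rightarrow> 'x)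
    \<Rightarrow> (real \<times> 'x) set \<Rightarrow> (real \<times> 'x) set" where
  "dl_map X \<phi> g \<xi> = (case dl_rep \<xi> of (b, x) \<Rightarrow> dl_class X \<phi> b (g b x))"

definition dl_sub :: "(real \<Rightarrow> 'x set) \<Rightarrow> (real \<Rightarrow> real \<Rightarrow> 'x \<Rightarrow> 'x) \<Rightarrow> ('x \<Rightarrow> 'x \<Rightarrow> 'x)
    \<Rightarrow> (real \<times> 'x) set \<Rightarrow> (real \<times> 'x) set \<Rightarrow> (real \<times> 'x) set" where
  "dl_sub X \<phi> sub \<xi> \<eta> = (case dl_rep \<xi> of (b1, x1) \<Rightarrow> case dl_rep \<eta> of (b2, x2) \<Rightarrow>
      dl_class X \<phi> (max b1 b2) (sub (\<phi> b1 (max b1 b2) x1) (\<phi> b2 (max b1 b2) x2)))"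

text \<open>Inverse limit of a system X a with maps pi a1 a2 : X a1 -> X a2 (a1 <= a2):
  compatible families.\<close>
definition ilim :: "(real \<Rightarrow> 'x set) \<Rightarrow> (real \<Rightarrow> real \<Rightarrow> 'x \<Rightarrow> 'x) \<Rightarrow> (real \<Rightarrow> 'x) set" where
  "ilim X \<pi> = {x. (\<forall>a. x a \<in> X a) \<and> (\<forall>a1 a2. a1 \<le> a2 \<longrightarrow> \<pi> a1 a2 (x a1) = x a2)}"

definition HM where
  "HM C f m a b = homology (CM C f a b) (bd C f m a b) (\<lambda>_. 0) csub"

text \<open>D_a = lim_b CM_a^b (w.r.t. the inclusions i_a)\<close>
definition DD where "DD C f a = dlim (\<lambda>b. CM C f a b) (\<lambda>_ _ x. x)"
definition dD where "dD C f m a = dl_map (\<lambda>b. CM C f a b) (\<lambda>_ _ x. x) (\<lambda>b. bd C f m a b)"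
definition zD where "zD C f a = dl_class (\<lambda>b. CM C f a b) (\<lambda>_ _ x. x) 0 (\<lambda>_. 0)"
definition subD where "subD C f a = dl_sub (\<lambda>b. CM C f a b) (\<lambda>_ _ x. x) csub"
definition HD where "HD C f m a = homology (DD C f a) (dD C f m a) (zD C f a) (subD C f a)"

definition limHM where
  "limHM C f m a = dlim (\<lambda>b. HM C f m a b)
      (\<lambda>b1 b2. hmap (CM C f a b2) (bd C f m a b2) (\<lambda>_. 0) csub id)"

definition mu_a where
  "mu_a C f m a \<xi> = (case dl_rep \<xi> of (b, c) \<Rightarrow>
      hclass (DD C f a) (dD C f m a) (zD C f a) (subD C f a)
        (dl_class (\<lambda>b. CM C f a b) (\<lambda>_ _ x. x) b (SOME z. z \<in> c)))"

definition LL where "LL C f b = ilim (\<lambda>a. CM C f a b) (\<lambda>a1 a2. prj f a2)"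
definition dL where "dL C f m b x = (\<lambda>a. bd C f m a b (x a))"
definition fsub :: "(real \<Rightarrow> 'c \<Rightarrow> 'k::ab_group_add) \<Rightarrow> (real \<Rightarrow> 'c \<Rightarrow> 'k) \<Rightarrow> (real \<Rightarrow> 'c \<Rightarrow> 'k)"
  where "fsub x y = (\<lambda>a. csub (x a) (y a))"
definition HL where "HL C f m b = homology (LL C f b) (dL C f m b) (\<lambda>_ _. 0) fsub"

definition ilimHM where
  "ilimHM C f m b = ilim (\<lambda>a. HM C f m a b)
      (\<lambda>a1 a2. hmap (CM C f a2 b) (bd C f m a2 b) (\<lambda>_. 0) csub (prj f a2))"

definition nu where
  "nu C f m b c = (let x = (SOME z. z \<in> c) in
      (\<lambda>a. hclass (CM C f a b) (bd C f m a b) (\<lambda>_. 0) csub (x a)))"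

text \<open>lim_b L^b (maps L^b1 -> L^b2 induced by the inclusions, i.e. identity on families)\<close>
definition LimL where "LimL C f = dlim (\<lambda>b. LL C f b) (\<lambda>_ _ x. x)"
definition dLimL where "dLimL C f m = dl_map (\<lambda>b. LL C f b) (\<lambda>_ _ x. x) (\<lambda>b. dL C f m b)"
definition zLimL where "zLimL C f = dl_class (\<lambda>b. LL C f b) (\<lambda>_ _ x. x) 0 (\<lambda>_ _. 0)"
definition subLimL where "subLimL C f = dl_sub (\<lambda>b. LL C f b) (\<lambda>_ _ x. x) fsub"
definition HLimL where "HLimL C f m = homology (LimL C f) (dLimL C f m) (zLimL C f) (subLimL C f)"

definition limHL where
  "limHL C f m = dlim (\<lambda>b. HL C f m b)
      (\<lambda>b1 b2. hmap (LL C f b2) (dL C f m b2) (\<lambda>_ _. 0) fsub id)"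

definition mu where
  "mu C f m \<xi> = (case dl_rep \<xi> of (b, c) \<Rightarrow>
      hclass (LimL C f) (dLimL C f m) (zLimL C f) (subLimL C f)
        (dl_class (\<lambda>b. LL C f b) (\<lambda>_ _ x. x) b (SOME z. z \<in> c)))"

end

theory Submission
  imports Defs "HOL-Library.Function_Algebras" "HOL.Vector_Spaces"
begin


section \<open>Generic homology facts\<close>

locale cplx =
  fixes V :: "'v::ab_group_add set" and d :: "'v \<Rightarrow> 'v"
  assumes V0: "0 \<in> V"
    and Vdiff: "x \<in> V \<Longrightarrow> y \<in> V \<Longrightarrow> x - y \<in> V"
    and dV: "x \<in> V \<Longrightarrow> d x \<in> V"
    and ddiff: "x \<in> V \<Longrightarrow> y \<in> V \<Longrightarrow> d (x - y) = d x - d y"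
begin

lemma d0: "d 0 = 0"
  using ddiff[OF V0 V0] by simp

lemma Vneg: "x \<in> V \<Longrightarrow> - x \<in> V"
  using Vdiff[OF V0] by fastforce

lemma Vadd: "x \<in> V \<Longrightarrow> y \<in> V \<Longrightarrow> x + y \<in> V"
  using Vdiff[OF _ Vneg[of y]] by fastforce

lemma dneg: "x \<in> V \<Longrightarrow> d (- x) = - d x"
  using ddiff[OF V0, of x] d0 by simp

lemma dadd: "x \<in> V \<Longrightarrow> y \<in> V \<Longrightarrow> d (x + y) = d x + d y"
  using ddiff[OF _ Vneg[of y], of x] dneg[of y] by simp

lemma B0: "0 \<in> d ` V"
  using d0 V0 by force

lemma Bneg: "u \<in> d ` V \<Longrightarrow> - u \<in> d ` V"
  using dneg Vneg by force

lemma Badd: "u \<in> d ` V \<Longrightarrow> w \<in> d ` V \<Longrightarrow> u + w \<in> d ` V"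
proof -
  assume "u \<in> d ` V" "w \<in> d ` V"
  then obtain x y where "x \<in> V" "y \<in> V" "u = d x" "w = d y" by auto
  then show ?thesis using dadd[of x y] Vadd[of x y] by force
qed

lemma Bdiff: "u \<in> d ` V \<Longrightarrow> w \<in> d ` V \<Longrightarrow> u - w \<in> d ` V"
  using Badd[OF _ Bneg[of w]] by simp

abbreviation "Z \<equiv> cycles V d 0"
abbreviation "hc \<equiv> hclass V d 0 minus"
abbreviation "H \<equiv> homology V d 0 minus"

lemma Z_iff: "z \<in> Z \<longleftrightarrow> z \<in> V \<and> d z = 0"
  by (simp add: cycles_def)

lemma hc_iff: "z' \<in> hc z \<longleftrightarrow> z' \<in> Z \<and> z' - z \<in> d ` V"
  by (simp add: hclass_def)

lemma hc_self: "z \<in> Z \<Longrightarrow> z \<in> hc z"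
  using B0 by (simp add: hc_iff)

lemma hc_eq: assumes "z1 \<in> Z" "z2 \<in> Z" shows "hc z1 = hc z2 \<longleftrightarrow> z1 - z2 \<in> d ` V"
proof
  assume "hc z1 = hc z2"
  then show "z1 - z2 \<in> d ` V" using hc_self[OF assms(1)] by (simp add: hc_iff)
next
  assume h: "z1 - z2 \<in> d ` V"
  show "hc z1 = hc z2"
  proof (rule set_eqI)
    fix z
    have "z - z2 = (z - z1) + (z1 - z2)" "z - z1 = (z - z2) - (z1 - z2)" by simp_all
    then show "z \<in> hc z1 \<longleftrightarrow> z \<in> hc z2"
      using h Badd Bdiff unfolding hc_iff by metis
  qed
qed

lemma H_cases: assumes "c \<in> H" obtains z where "z \<in> Z" "c = hc z"
  using assms by (auto simp: homology_def)

lemma H_mem: "z \<in> Z \<Longrightarrow> hc z \<in> H"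
  by (simp add: homology_def)

lemma H_some: assumes "c \<in> H"
  shows "(SOME z. z \<in> c) \<in> c" "(SOME z. z \<in> c) \<in> Z" "hc (SOME z. z \<in> c) = c"
proof -
  obtain z where z: "z \<in> Z" "c = hc z" using H_cases[OF assms] .
  then have "z \<in> c" using hc_self by simp
  then show 1: "(SOME z. z \<in> c) \<in> c" by (rule someI)
  then show 2: "(SOME z. z \<in> c) \<in> Z" using z by (simp add: hc_iff)
  show "hc (SOME z. z \<in> c) = c" using 1 2 z hc_eq by (simp add: hc_iff)
qed

lemma H_memb: assumes "c \<in> H" "z \<in> c" shows "hc z = c" "z \<in> Z"
proof -
  obtain z0 where z: "z0 \<in> Z" "c = hc z0" using H_cases[OF assms(1)] .
  then show "z \<in> Z" using assms by (simp add: hc_iff)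
  then show "hc z = c" using z assms hc_eq by (simp add: hc_iff)
qed

end




lemma dl_class_eqI:
  fixes Y :: "real \<Rightarrow> 'x set" and \<phi> :: "real \<Rightarrow> real \<Rightarrow> 'x \<Rightarrow> 'x"
  assumes comp: "\<And>b1 b2 b3 y. b1 \<le> b2 \<Longrightarrow> b2 \<le> b3 \<Longrightarrow> y \<in> Y b1 \<Longrightarrow> \<phi> b2 b3 (\<phi> b1 b2 y) = \<phi> b1 b3 y"
    and y: "y \<in> Y b" and y': "y' \<in> Y b'"
    and eq: "b \<le> b0" "b' \<le> b0" "\<phi> b b0 y = \<phi> b' b0 y'"
  shows "dl_class Y \<phi> b y = dl_class Y \<phi> b' y'"
proof -
  have *: "(b2, y2) \<in> dl_class Y \<phi> b' y'" if "(b2, y2) \<in> dl_class Y \<phi> b y"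
    and comp: "\<And>b1 b2 b3 y. b1 \<le> b2 \<Longrightarrow> b2 \<le> b3 \<Longrightarrow> y \<in> Y b1 \<Longrightarrow> \<phi> b2 b3 (\<phi> b1 b2 y) = \<phi> b1 b3 y"
    and y: "y \<in> Y b" and y': "y' \<in> Y b'"
    and eq: "b \<le> b0" "b' \<le> b0" "\<phi> b b0 y = \<phi> b' b0 y'"
    for b y b' y' b0 b2 y2
  proof -
    from that(1) obtain b3 where h: "y2 \<in> Y b2" "b \<le> b3" "b2 \<le> b3" "\<phi> b b3 y = \<phi> b2 b3 y2"
      by (auto simp: dl_class_def)
    define b4 where "b4 = max b0 b3"
    have "\<phi> b' b4 y' = \<phi> b0 b4 (\<phi> b' b0 y')" using comp[of b' b0 b4 y'] eq y' by (simp add: b4_def)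
    also have "\<dots> = \<phi> b0 b4 (\<phi> b b0 y)" using eq by simp
    also have "\<dots> = \<phi> b b4 y" using comp[of b b0 b4 y] eq y by (simp add: b4_def)
    also have "\<dots> = \<phi> b3 b4 (\<phi> b b3 y)" using comp[of b b3 b4 y] h y by (simp add: b4_def)
    also have "\<dots> = \<phi> b3 b4 (\<phi> b2 b3 y2)" using h by simp
    also have "\<dots> = \<phi> b2 b4 y2" using comp[of b2 b3 b4 y2] h by (simp add: b4_def)
    finally show ?thesis using h eq by (auto simp: dl_class_def b4_def intro!: exI[of _ b4])
  qed
  show ?thesis
    apply (rule set_eqI)
    apply (case_tac x)
    using *[OF _ comp y y' eq] *[OF _ comp y' y eq(2,1) eq(3)[symmetric]] by blast
qed

lemma dl_class_self: "(b, y) \<in> dl_class Y \<phi> b y \<longleftrightarrow> y \<in> Y b"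
  by (auto simp: dl_class_def)

lemma dl_rep_in: assumes "y \<in> Y b" shows "dl_rep (dl_class Y \<phi> b y) \<in> dl_class Y \<phi> b y"
  unfolding dl_rep_def using dl_class_self[of b y Y \<phi>] assms by (metis someI)

lemma ex_ge_max: "\<exists>c::real. b \<le> c \<and> a \<le> c"
  by (rule exI[of _ "max a b"]) simp

locale dsys =
  fixes X :: "real \<Rightarrow> 'v::ab_group_add set" and d :: "real \<Rightarrow> 'v \<Rightarrow> 'v"
  assumes cx: "\<And>b. cplx (X b) (d b)"
    and Xmono: "\<And>b1 b2. b1 \<le> b2 \<Longrightarrow> X b1 \<subseteq> X b2"
    and dmono: "\<And>b1 b2 x. b1 \<le> b2 \<Longrightarrow> x \<in> X b1 \<Longrightarrow> d b2 x = d b1 x"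
begin

definition "U = (\<Union>b. X b)"
definition "dU x = d (SOME b. x \<in> X b) x"

lemma U_iff: "x \<in> U \<longleftrightarrow> (\<exists>b. x \<in> X b)" by (auto simp: U_def)

lemma dU_eq: assumes "x \<in> X b" shows "dU x = d b x"
proof -
  let ?b0 = "SOME b. x \<in> X b"
  have b0: "x \<in> X ?b0" using assms by (rule someI)
  have "d (max b ?b0) x = d ?b0 x" by (rule dmono[OF _ b0]) simp
  moreover have "d (max b ?b0) x = d b x" by (rule dmono[OF _ assms]) simp
  ultimately show ?thesis by (simp add: dU_def)
qed

lemma X_max1: "x \<in> X b1 \<Longrightarrow> x \<in> X (max b1 b2)" using Xmono[of b1 "max b1 b2"] by (meson max.cobounded1 subsetD)
lemma X_max2: "x \<in> X b2 \<Longrightarrow> x \<in> X (max b1 b2)" using Xmono[of b2 "max b1 b2"] by (meson max.cobounded2 subsetD)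

lemma U_cplx: "cplx U dU"
proof
  show "0 \<in> U" using cplx.V0[OF cx] U_iff by blast
  fix x y assume x: "x \<in> U" and y: "y \<in> U"
  then obtain b1 b2 where b: "x \<in> X b1" "y \<in> X b2" using U_iff by blast
  have xy: "x \<in> X (max b1 b2)" "y \<in> X (max b1 b2)" using X_max1[OF b(1)] X_max2[OF b(2)] .
  have xmy: "x - y \<in> X (max b1 b2)" by (rule cplx.Vdiff[OF cx xy])
  then show "x - y \<in> U" using U_iff by blast
  show "dU (x - y) = dU x - dU y"
    unfolding dU_eq[OF xmy] dU_eq[OF xy(1)] dU_eq[OF xy(2)] by (rule cplx.ddiff[OF cx xy])
next
  fix x assume "x \<in> U"
  then obtain b where b: "x \<in> X b" using U_iff by blast
  have "dU x \<in> X b" unfolding dU_eq[OF b] by (rule cplx.dV[OF cx b])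
  then show "dU x \<in> U" using U_iff by blast
qed

sublocale UU: cplx U dU by (rule U_cplx)

abbreviation idm :: "real \<Rightarrow> real \<Rightarrow> 'v \<Rightarrow> 'v" where "idm \<equiv> (\<lambda>_ _ x. x)"

definition "Ecl x = {(b', x'). x' \<in> X b' \<and> x' = x}"

lemma dl_class_idm: "dl_class X idm b x = Ecl x"
proof (rule set_eqI)
  fix p :: "real \<times> 'v" obtain b' x' where p: "p = (b', x')" by fastforce
  have "\<exists>b''. b \<le> b'' \<and> b' \<le> b''" by (rule exI[of _ "max b b'"]) simp
  then show "p \<in> dl_class X idm b x \<longleftrightarrow> p \<in> Ecl x"
    unfolding p dl_class_def Ecl_def by auto
qed

lemma Ecl_inj: assumes "x \<in> U" "Ecl x = Ecl y" shows "x = y"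
proof -
  obtain b where "x \<in> X b" using assms(1) U_iff by blast
  then have "(b, x) \<in> Ecl x" by (simp add: Ecl_def)
  then have "(b, x) \<in> Ecl y" using assms(2) by simp
  then show ?thesis by (simp add: Ecl_def)
qed

lemma inj_Ecl: "inj_on Ecl U" unfolding inj_on_def using Ecl_inj by blast

lemma DL_eq: "dlim X idm = Ecl ` U"
proof (rule set_eqI)
  fix \<xi>
  have "\<xi> \<in> dlim X idm \<longleftrightarrow> (\<exists>b x. \<xi> = Ecl x \<and> x \<in> X b)"
    unfolding dlim_def dl_class_idm by auto
  also have "\<dots> \<longleftrightarrow> \<xi> \<in> Ecl ` U"
  proof
    assume "\<exists>b x. \<xi> = Ecl x \<and> x \<in> X b"
    then obtain b x where "\<xi> = Ecl x" "x \<in> X b" by blast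
    moreover then have "x \<in> U" using U_iff by blast
    ultimately show "\<xi> \<in> Ecl ` U" by (simp only: image_eqI)
  next
    assume "\<xi> \<in> Ecl ` U"
    then obtain x where "\<xi> = Ecl x" "x \<in> U" by (elim imageE) simp
    moreover then obtain b where "x \<in> X b" using U_iff by blast
    ultimately show "\<exists>b x. \<xi> = Ecl x \<and> x \<in> X b" by blast
  qed
  finally show "\<xi> \<in> dlim X idm \<longleftrightarrow> \<xi> \<in> Ecl ` U" .
qed

lemma rep_Ecl: assumes "x \<in> U" obtains b where "dl_rep (Ecl x) = (b, x)" "x \<in> X b"
proof -
  obtain b0 where "x \<in> X b0" using assms by (auto simp: U_def)
  then have "dl_rep (Ecl x) \<in> Ecl x" using dl_rep_in[of x X b0 idm] by (simp add: dl_class_idm)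
  then show ?thesis using that by (auto simp: Ecl_def)
qed

lemma DM_Ecl: "x \<in> U \<Longrightarrow> dl_map X idm d (Ecl x) = Ecl (dU x)"
  by (rule rep_Ecl, assumption) (simp add: dl_map_def dl_class_idm dU_eq)

lemma DS_Ecl: "x \<in> U \<Longrightarrow> y \<in> U \<Longrightarrow> dl_sub X idm minus (Ecl x) (Ecl y) = Ecl (x - y)"
  by (rule rep_Ecl, assumption, rule rep_Ecl[of y], assumption) (simp add: dl_sub_def dl_class_idm)

lemma DZ_Ecl: "dl_class X idm 0 0 = Ecl 0" by (simp add: dl_class_idm)

abbreviation "DL \<equiv> dlim X idm"
abbreviation "DM \<equiv> dl_map X idm d"
abbreviation "DS \<equiv> dl_sub X idm minus"
abbreviation "DZ \<equiv> dl_class X idm 0 0"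

lemma cycles_DL: "cycles DL DM DZ = Ecl ` UU.Z"
proof (rule set_eqI, rule iffI)
  fix \<xi> assume "\<xi> \<in> cycles DL DM DZ"
  then obtain x where x: "x \<in> U" "\<xi> = Ecl x" "DM \<xi> = DZ" by (auto simp: cycles_def DL_eq)
  then have "Ecl (dU x) = Ecl 0" using DM_Ecl DZ_Ecl by simp
  then have "dU x = 0" using Ecl_inj UU.dV x(1) by blast
  then show "\<xi> \<in> Ecl ` UU.Z" using x UU.Z_iff by blast
next
  fix \<xi> assume "\<xi> \<in> Ecl ` UU.Z"
  then obtain x where x: "x \<in> UU.Z" "\<xi> = Ecl x" by auto
  then have "x \<in> U" "dU x = 0" using UU.Z_iff by auto
  then have "DM \<xi> = DZ" "\<xi> \<in> DL" using x(2) DM_Ecl DZ_Ecl DL_eq by auto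
  then show "\<xi> \<in> cycles DL DM DZ" unfolding cycles_def by blast
qed

lemma DM_DL: "DM ` DL = Ecl ` dU ` U"
proof -
  have "DM ` DL = (\<lambda>x. DM (Ecl x)) ` U" unfolding DL_eq image_image ..
  also have "\<dots> = (\<lambda>x. Ecl (dU x)) ` U" by (rule image_cong[OF refl]) (simp add: DM_Ecl)
  finally show ?thesis by (simp only: image_image)
qed

lemma hclass_DL: assumes z: "z \<in> U" shows "hclass DL DM DZ DS (Ecl z) = Ecl ` UU.hc z"
proof (rule set_eqI, rule iffI)
  fix \<xi> assume "\<xi> \<in> hclass DL DM DZ DS (Ecl z)"
  then have h: "\<xi> \<in> cycles DL DM DZ" "DS \<xi> (Ecl z) \<in> DM ` DL" unfolding hclass_def by auto
  from h(1) have "\<xi> \<in> Ecl ` UU.Z" by (simp only: cycles_DL)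
  then obtain x where x: "x \<in> UU.Z" "\<xi> = Ecl x" by (elim imageE) simp
  then have xU: "x \<in> U" using UU.Z_iff by auto
  have "Ecl (x - z) \<in> Ecl ` dU ` U" using h(2) unfolding DS_Ecl[OF xU z, folded x(2)] DM_DL .
  then have "x - z \<in> dU ` U"
    using inj_on_image_mem_iff[OF inj_Ecl, of "x - z" "dU ` U"] UU.Vdiff[OF xU z] UU.dV by blast
  then have "x \<in> UU.hc z" using x UU.hc_iff by blast
  then show "\<xi> \<in> Ecl ` UU.hc z" unfolding x(2) by (rule imageI)
next
  fix \<xi> assume "\<xi> \<in> Ecl ` UU.hc z"
  then obtain x where x: "x \<in> UU.hc z" "\<xi> = Ecl x" by (elim imageE) simp
  then have xz: "x \<in> UU.Z" "x - z \<in> dU ` U" using UU.hc_iff by auto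
  then have xU: "x \<in> U" using UU.Z_iff by auto
  have "\<xi> \<in> cycles DL DM DZ" unfolding cycles_DL x(2) using xz(1) by (rule imageI)
  moreover have "DS \<xi> (Ecl z) \<in> DM ` DL" unfolding x(2) DS_Ecl[OF xU z] DM_DL
    using xz(2) by (rule imageI)
  ultimately show "\<xi> \<in> hclass DL DM DZ DS (Ecl z)" unfolding hclass_def by blast
qed

lemma homology_DL: "homology DL DM DZ DS = (\<lambda>c. Ecl ` c) ` UU.H"
proof -
  have "homology DL DM DZ DS = (\<lambda>z. hclass DL DM DZ DS (Ecl z)) ` UU.Z"
    unfolding homology_def cycles_DL image_image ..
  also have "\<dots> = (\<lambda>z. Ecl ` UU.hc z) ` UU.Z"
    by (rule image_cong[OF refl]) (simp add: hclass_DL UU.Z_iff)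
  also have "\<dots> = (\<lambda>c. Ecl ` c) ` UU.H"
    unfolding homology_def image_image ..
  finally show ?thesis .
qed

abbreviation "HX b \<equiv> homology (X b) (d b) 0 minus"
abbreviation "hcX b \<equiv> hclass (X b) (d b) 0 minus"
abbreviation "ZX b \<equiv> cycles (X b) (d b) 0"
abbreviation "psi \<equiv> (\<lambda>b1 b2. hmap (X b2) (d b2) 0 minus id)"

lemma cyc_mono: assumes "b \<le> b'" "z \<in> ZX b" shows "z \<in> ZX b'"
proof -
  have "z \<in> X b" "d b z = 0" using assms(2) cplx.Z_iff[OF cx] by auto
  then have "z \<in> X b'" "d b' z = 0" using Xmono[OF assms(1)] dmono[OF assms(1)] by auto
  then show ?thesis using cplx.Z_iff[OF cx] by auto
qed

lemma bnd_mono: assumes "b \<le> b'" "u \<in> d b ` X b" shows "u \<in> d b' ` X b'"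
proof -
  obtain y where y: "y \<in> X b" "u = d b y" using assms(2) by blast
  then have "y \<in> X b'" "u = d b' y" using Xmono[OF assms(1)] dmono[OF assms(1)] by auto
  then show ?thesis by blast
qed

lemma cyc_U: assumes "z \<in> ZX b" shows "z \<in> UU.Z"
proof -
  have "z \<in> X b" "d b z = 0" using assms cplx.Z_iff[OF cx] by auto
  then show ?thesis using UU.Z_iff dU_eq U_iff by auto
qed

lemma bnd_U: assumes "u \<in> d b ` X b" shows "u \<in> dU ` U"
proof -
  obtain y where y: "y \<in> X b" "u = d b y" using assms by blast
  then have "u = dU y" "y \<in> U" using dU_eq U_iff by auto
  then show ?thesis by blast
qed

lemma U_cyc: assumes "z \<in> UU.Z" obtains b where "z \<in> ZX b"
proof -
  obtain b where "z \<in> X b" "dU z = 0" using assms UU.Z_iff U_iff by auto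
  then have "z \<in> ZX b" using dU_eq cplx.Z_iff[OF cx] by auto
  then show ?thesis using that by blast
qed

lemma U_bnd: assumes "u \<in> dU ` U" obtains b where "u \<in> d b ` X b"
proof -
  obtain y where y: "y \<in> U" "u = dU y" using assms by blast
  then obtain b where "y \<in> X b" using U_iff by blast
  then have "u \<in> d b ` X b" using y dU_eq by auto
  then show ?thesis using that by blast
qed

lemma psi_eq: "psi b1 b2 c = hcX b2 (SOME z. z \<in> c)"
  by (simp add: hmap_def)

lemma psi_in: assumes "c \<in> HX b1" "b1 \<le> b2" shows "psi b1 b2 c \<in> HX b2"
proof -
  have "(SOME z. z \<in> c) \<in> ZX b1" using cplx.H_some(2)[OF cx assms(1)] .
  then have "(SOME z. z \<in> c) \<in> ZX b2" using cyc_mono assms(2) by blast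
  then show ?thesis unfolding psi_eq by (rule cplx.H_mem[OF cx])
qed

lemma psi_comp: assumes "b1 \<le> b2" "b2 \<le> b3" "c \<in> HX b1"
  shows "psi b2 b3 (psi b1 b2 c) = psi b1 b3 c"
proof -
  define z where "z = (SOME z. z \<in> c)"
  have z1: "z \<in> ZX b1" unfolding z_def using cplx.H_some(2)[OF cx assms(3)] .
  then have z2: "z \<in> ZX b2" and z3: "z \<in> ZX b3" using cyc_mono assms by (blast, meson order_trans)
  define c2 where "c2 = hcX b2 z"
  have c2: "c2 \<in> HX b2" unfolding c2_def using z2 by (rule cplx.H_mem[OF cx])
  define z' where "z' = (SOME z. z \<in> c2)"
  have "z' \<in> c2" unfolding z'_def using cplx.H_some(1)[OF cx c2] .
  then have z'c: "z' \<in> ZX b2" "z' - z \<in> d b2 ` X b2" unfolding c2_def using cplx.hc_iff[OF cx] by auto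
  then have "z' \<in> ZX b3" "z' - z \<in> d b3 ` X b3" using cyc_mono bnd_mono assms(2) by auto
  then have "hcX b3 z' = hcX b3 z" using cplx.hc_eq[OF cx _ z3] by blast
  then show ?thesis unfolding psi_eq z'_def[symmetric] c2_def[symmetric] z_def[symmetric] .
qed

definition "muG \<xi> = (case dl_rep \<xi> of (b, c) \<Rightarrow> hclass DL DM DZ DS (dl_class X idm b (SOME z. z \<in> c)))"

lemma muG_key: assumes c: "c \<in> HX b"
  shows "muG (dl_class HX psi b c) = Ecl ` UU.hc (SOME z. z \<in> c)"
proof -
  define \<xi> where "\<xi> = dl_class HX psi b c"
  have "dl_rep \<xi> \<in> \<xi>" unfolding \<xi>_def using dl_rep_in[of c HX b psi] c by simp
  then obtain b' c' b3 where r: "dl_rep \<xi> = (b', c')" "c' \<in> HX b'" "b \<le> b3" "b' \<le> b3"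
    "psi b b3 c = psi b' b3 c'"
    unfolding \<xi>_def dl_class_def by auto
  define z where "z = (SOME z. z \<in> c)"
  define z' where "z' = (SOME z. z \<in> c')"
  have z: "z \<in> ZX b" unfolding z_def using cplx.H_some(2)[OF cx c] .
  have z': "z' \<in> ZX b'" unfolding z'_def using cplx.H_some(2)[OF cx r(2)] .
  have z3: "z \<in> ZX b3" using cyc_mono[OF r(3) z] .
  have z'3: "z' \<in> ZX b3" using cyc_mono[OF r(4) z'] .
  have "hcX b3 z = hcX b3 z'" using r(5) unfolding psi_eq z_def z'_def .
  then have "z - z' \<in> d b3 ` X b3" using cplx.hc_eq[OF cx z3 z'3] by simp
  then have "z - z' \<in> dU ` U" by (rule bnd_U)
  then have hceq: "UU.hc z = UU.hc z'" using UU.hc_eq cyc_U[OF z3] cyc_U[OF z'3] by simp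
  have z'U: "z' \<in> U" using cyc_U[OF z'] UU.Z_iff by auto
  have "muG \<xi> = hclass DL DM DZ DS (Ecl z')"
    unfolding muG_def r(1) z'_def dl_class_idm by simp
  also have "\<dots> = Ecl ` UU.hc z'" by (rule hclass_DL[OF z'U])
  finally show ?thesis unfolding \<xi>_def z_def[symmetric] hceq .
qed

lemma dlimHX_cases: assumes "\<xi> \<in> dlim HX psi" obtains b c where "c \<in> HX b" "\<xi> = dl_class HX psi b c"
  using assms unfolding dlim_def by blast

theorem muG_bij: "bij_betw muG (dlim HX psi) (homology DL DM DZ DS)"
proof (rule bij_betw_imageI)
  show "inj_on muG (dlim HX psi)"
  proof (rule inj_onI)
    fix \<xi>1 \<xi>2 assume h1: "\<xi>1 \<in> dlim HX psi" and h2: "\<xi>2 \<in> dlim HX psi" and eq: "muG \<xi>1 = muG \<xi>2"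
    obtain b1 c1 where c1: "c1 \<in> HX b1" "\<xi>1 = dl_class HX psi b1 c1" using dlimHX_cases[OF h1] .
    obtain b2 c2 where c2: "c2 \<in> HX b2" "\<xi>2 = dl_class HX psi b2 c2" using dlimHX_cases[OF h2] .
    define z1 where "z1 = (SOME z. z \<in> c1)"
    define z2 where "z2 = (SOME z. z \<in> c2)"
    have z1: "z1 \<in> ZX b1" unfolding z1_def using cplx.H_some(2)[OF cx c1(1)] .
    have z2: "z2 \<in> ZX b2" unfolding z2_def using cplx.H_some(2)[OF cx c2(1)] .
    have e: "Ecl ` UU.hc z1 = Ecl ` UU.hc z2" using eq unfolding c1(2) c2(2) muG_key[OF c1(1)] muG_key[OF c2(1)] z1_def z2_def .
    have s: "UU.hc z1 \<subseteq> U" "UU.hc z2 \<subseteq> U" using UU.hc_iff UU.Z_iff by auto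
    have "UU.hc z1 = UU.hc z2" using e unfolding inj_on_image_eq_iff[OF inj_Ecl s] .
    then have "z1 - z2 \<in> dU ` U" using UU.hc_eq[OF cyc_U[OF z1] cyc_U[OF z2]] by (simp only:)
    then obtain b3 where b3: "z1 - z2 \<in> d b3 ` X b3" by (rule U_bnd)
    define b4 where "b4 = max (max b1 b2) b3"
    have le: "b1 \<le> b4" "b2 \<le> b4" "b3 \<le> b4" unfolding b4_def by auto
    have "hcX b4 z1 = hcX b4 z2"
      using cplx.hc_eq[OF cx cyc_mono[OF le(1) z1] cyc_mono[OF le(2) z2]] bnd_mono[OF le(3) b3] by simp
    then have "psi b1 b4 c1 = psi b2 b4 c2" unfolding psi_eq z1_def z2_def .
    then have "dl_class HX psi b1 c1 = dl_class HX psi b2 c2"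
      by (intro dl_class_eqI[OF _ c1(1) c2(1) le(1,2)]) (rule psi_comp)
    then show "\<xi>1 = \<xi>2" unfolding c1(2) c2(2) .
  qed
next
  show "muG ` dlim HX psi = homology DL DM DZ DS"
  proof (rule set_eqI, rule iffI)
    fix \<eta> assume "\<eta> \<in> muG ` dlim HX psi"
    then obtain \<xi> where \<xi>: "\<xi> \<in> dlim HX psi" "\<eta> = muG \<xi>" by (elim imageE) simp
    obtain b c where c: "c \<in> HX b" "\<xi> = dl_class HX psi b c" using dlimHX_cases[OF \<xi>(1)] .
    have zc: "(SOME z. z \<in> c) \<in> UU.Z" using cyc_U cplx.H_some(2)[OF cx c(1)] by blast
    have "\<eta> = Ecl ` UU.hc (SOME z. z \<in> c)" unfolding \<xi>(2) c(2) muG_key[OF c(1)] ..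
    also have "\<dots> \<in> (\<lambda>c. Ecl ` c) ` UU.H" using UU.H_mem[OF zc] by (rule imageI)
    finally show "\<eta> \<in> homology DL DM DZ DS" unfolding homology_DL .
  next
    fix \<eta> assume "\<eta> \<in> homology DL DM DZ DS"
    then have "\<eta> \<in> (\<lambda>c. Ecl ` c) ` UU.H" unfolding homology_DL .
    then obtain h where h: "h \<in> UU.H" "\<eta> = Ecl ` h" by (elim imageE) simp
    obtain z where z: "z \<in> UU.Z" "h = UU.hc z" using UU.H_cases[OF h(1)] .
    obtain b where zb: "z \<in> ZX b" using U_cyc[OF z(1)] .
    define c where "c = hcX b z"
    have c: "c \<in> HX b" unfolding c_def using zb by (rule cplx.H_mem[OF cx])
    define z' where "z' = (SOME z. z \<in> c)"
    have "z' \<in> c" unfolding z'_def by (rule cplx.H_some(1)[OF cx c])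
    then have z': "z' \<in> ZX b" "z' - z \<in> d b ` X b" unfolding c_def using cplx.hc_iff[OF cx] by auto
    then have "UU.hc z' = UU.hc z" using UU.hc_eq[OF cyc_U[OF z'(1)] z(1)] bnd_U by (simp only:)
    then have e: "muG (dl_class HX psi b c) = \<eta>" unfolding muG_key[OF c] z'_def[symmetric] h(2) z(2) by simp
    have "dl_class HX psi b c \<in> dlim HX psi" using c unfolding dlim_def by blast
    then have "muG (dl_class HX psi b c) \<in> muG ` dlim HX psi" by (rule imageI)
    then show "\<eta> \<in> muG ` dlim HX psi" unfolding e .
  qed
qed

end




lemma csub_eq: "csub = minus" by (simp add: fun_eq_iff csub_def)
lemma fsub_eq: "fsub = minus" by (simp add: fun_eq_iff fsub_def csub_def)
lemma z1_eq: "(\<lambda>_::'c. 0::'k::zero) = 0" by (simp add: fun_eq_iff)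
lemma z2_eq: "(\<lambda>_::real. \<lambda>_::'c. 0::'k::zero) = 0" by (simp add: fun_eq_iff)

locale floer =
  fixes C :: "'c set" and f :: "'c \<Rightarrow> real" and m :: "'c \<Rightarrow> 'c \<Rightarrow> 'k::field"
  assumes ft: "floer_triple C f m"
begin

abbreviation CMk :: "real \<Rightarrow> real \<Rightarrow> ('c \<Rightarrow> 'k) set" where "CMk a b \<equiv> CM C f a b"
abbreviation LLk :: "real \<Rightarrow> (real \<Rightarrow> 'c \<Rightarrow> 'k) set" where "LLk b \<equiv> LL C f b"

lemma Cab_iff: "c \<in> Cab C f a b \<longleftrightarrow> c \<in> C \<and> a \<le> f c \<and> f c \<le> b"
  by (simp add: Cab_def)

lemma finite_Cab: "finite (Cab C f a b)"
proof (cases "a \<le> b")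
  case True then show ?thesis using ft by (simp add: floer_triple_def)
next
  case False then have "Cab C f a b = {}" by (auto simp: Cab_def)
  then show ?thesis by simp
qed

lemma m_lt: "c1 \<in> C \<Longrightarrow> c2 \<in> C \<Longrightarrow> m c1 c2 \<noteq> 0 \<Longrightarrow> f c1 < f c2"
  using ft by (simp add: floer_triple_def)

lemma m_zero: "c1 \<in> C \<Longrightarrow> c2 \<in> C \<Longrightarrow> f c2 \<le> f c1 \<Longrightarrow> m c1 c2 = 0"
  using m_lt by force

lemma CM_iff: "x \<in> CMk a b \<longleftrightarrow> (\<forall>c. x c \<noteq> 0 \<longrightarrow> c \<in> C \<and> a \<le> f c \<and> f c \<le> b)"
  by (simp add: CM_def Cab_def)

lemma CM_out: "x \<in> CMk a b \<Longrightarrow> c \<notin> Cab C f a b \<Longrightarrow> x c = 0"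
  by (auto simp: CM_def)

lemma CM_0: "0 \<in> CMk a b" by (simp add: CM_def)

lemma CM_diff: assumes "x \<in> CMk a b" "y \<in> CMk a b" shows "x - y \<in> CMk a b"
proof -
  have "(x - y) c \<noteq> 0 \<Longrightarrow> c \<in> Cab C f a b" for c
  proof (rule ccontr)
    assume "(x - y) c \<noteq> 0" "c \<notin> Cab C f a b"
    then show False using CM_out[OF assms(1)] CM_out[OF assms(2)] by simp
  qed
  then show ?thesis by (simp add: CM_def)
qed

lemma CM_mono: "a2 \<le> a1 \<Longrightarrow> b1 \<le> b2 \<Longrightarrow> CMk a1 b1 \<subseteq> CMk a2 b2"
  by (auto simp: CM_iff) (meson order_trans)+

lemma bd_CM: "bd C f m a b x \<in> CMk a b"
  by (simp add: CM_def bd_def)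

lemma bd_diff: "bd C f m a b (x - y) = bd C f m a b x - bd C f m a b y"
  by (simp add: fun_eq_iff bd_def right_diff_distrib sum_subtractf)

lemma bd_mono: assumes x: "x \<in> CMk a b1" and b: "b1 \<le> b2"
  shows "bd C f m a b2 x = bd C f m a b1 x"
proof (rule ext)
  fix c'
  have sub: "Cab C f a b1 \<subseteq> Cab C f a b2" using b by (auto simp: Cab_def)
  have S: "(\<Sum>c\<in>Cab C f a b2. m c' c * x c) = (\<Sum>c\<in>Cab C f a b1. m c' c * x c)"
    by (rule sum.mono_neutral_right[OF finite_Cab sub]) (auto simp: CM_out[OF x])
  show "bd C f m a b2 x c' = bd C f m a b1 x c'"
  proof (cases "c' \<in> Cab C f a b1")
    case True then show ?thesis using sub S by (auto simp: bd_def)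
  next
    case False
    show ?thesis
    proof (cases "c' \<in> Cab C f a b2")
      case True
      then have c': "c' \<in> C" "b1 < f c'" using False by (auto simp: Cab_def)
      have "m c' c * x c = 0" if "c \<in> Cab C f a b1" for c
        using that c' m_zero[of c' c] by (auto simp: Cab_def)
      then have "(\<Sum>c\<in>Cab C f a b1. m c' c * x c) = 0" by (intro sum.neutral) blast
      then show ?thesis using False True S by (simp add: bd_def)
    next
      case False2: False
      then show ?thesis using False by (simp add: bd_def)
    qed
  qed
qed

lemma cplx_CM: "cplx (CMk a b) (bd C f m a b)"
  by unfold_locales (simp_all add: CM_0 CM_diff bd_CM bd_diff)

lemma dsys_CM: "dsys (\<lambda>b. CMk a b) (\<lambda>b. bd C f m a b)"
  unfolding dsys_def using cplx_CM CM_mono[OF order_refl] bd_mono by blast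

lemma prj_CM: "x \<in> CMk a1 b \<Longrightarrow> prj f a2 x \<in> CMk a2 b"
  by (auto simp: CM_iff prj_def)

lemma prj_diff: "prj f a (x - y :: 'c \<Rightarrow> 'k) = prj f a x - prj f a y"
  by (auto simp: fun_eq_iff prj_def)

lemma prj_0: "prj f a (0::'c\<Rightarrow>'k) = 0"
  by (simp add: fun_eq_iff prj_def)

lemma prj_prj: "a2 \<le> a3 \<Longrightarrow> prj f a3 (prj f a2 (x::'c\<Rightarrow>'k)) = prj f a3 x"
  by (simp add: fun_eq_iff prj_def)

lemma prj_id: "x \<in> CMk a b \<Longrightarrow> prj f a x = x"
  by (auto simp: fun_eq_iff prj_def CM_iff)

lemma bd_prj: assumes x: "x \<in> CMk a1 b" and a: "a1 \<le> a2"
  shows "bd C f m a2 b (prj f a2 x) = prj f a2 (bd C f m a1 b x)"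
proof (rule ext)
  fix c'
  show "bd C f m a2 b (prj f a2 x) c' = prj f a2 (bd C f m a1 b x) c'"
  proof (cases "c' \<in> Cab C f a2 b")
    case True
    then have c': "c' \<in> Cab C f a1 b" "a2 \<le> f c'" "c' \<in> C" using a by (auto simp: Cab_def)
    have sub: "Cab C f a2 b \<subseteq> Cab C f a1 b" using a by (auto simp: Cab_def)
    have "(\<Sum>c\<in>Cab C f a2 b. m c' c * prj f a2 x c) = (\<Sum>c\<in>Cab C f a2 b. m c' c * x c)"
      by (rule sum.cong) (auto simp: prj_def Cab_def)
    also have "\<dots> = (\<Sum>c\<in>Cab C f a1 b. m c' c * x c)"
    proof (rule sum.mono_neutral_left[OF finite_Cab sub], rule ballI)
      fix c assume "c \<in> Cab C f a1 b - Cab C f a2 b"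
      then have "c \<in> C" "f c \<le> f c'" using c' by (auto simp: Cab_def)
      then show "m c' c * x c = 0" using m_zero[of c' c] c' by simp
    qed
    finally show ?thesis using True c' by (simp add: bd_def prj_def)
  next
    case False
    have "prj f a2 (bd C f m a1 b x) c' = 0"
      using False by (auto simp: prj_def bd_def Cab_def)
    then show ?thesis using False by (simp add: bd_def)
  qed
qed

lemma LL_iff: "x \<in> LLk b \<longleftrightarrow> (\<forall>a. x a \<in> CMk a b) \<and> (\<forall>a1 a2. a1 \<le> a2 \<longrightarrow> prj f a2 (x a1) = x a2)"
  by (simp add: LL_def ilim_def)

lemma cplx_LL: "cplx (LLk b) (dL C f m b)"
proof
  show "0 \<in> LLk b" by (simp add: LL_iff CM_0 prj_0)
  fix x y assume x: "x \<in> LLk b" and y: "y \<in> LLk b"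
  show "x - y \<in> LLk b" using x y by (simp add: LL_iff CM_diff prj_diff)
  show "dL C f m b (x - y) = dL C f m b x - dL C f m b y"
    by (simp add: fun_eq_iff dL_def bd_diff)
next
  fix x assume x: "x \<in> LLk b"
  then show "dL C f m b x \<in> LLk b"
    by (auto simp: LL_iff dL_def bd_CM bd_prj[symmetric])
qed

lemma dsys_LL: "dsys (\<lambda>b. LLk b) (\<lambda>b. dL C f m b)"
proof -
  have "b1 \<le> b2 \<Longrightarrow> LLk b1 \<subseteq> LLk b2" for b1 b2
    using CM_mono[OF order_refl, of b1 b2] by (simp add: LL_iff subset_iff)
  moreover have "b1 \<le> b2 \<Longrightarrow> x \<in> LLk b1 \<Longrightarrow> dL C f m b2 x = dL C f m b1 x" for b1 b2 x
    unfolding dL_def LL_iff by (intro ext) (simp add: bd_mono[of _ _ b1 b2])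
  ultimately show ?thesis unfolding dsys_def using cplx_LL by blast
qed

theorem part1: "bij_betw (mu_a C f m a) (limHM C f m a) (HD C f m a)"
proof -
  interpret D: dsys "\<lambda>b. CM C f a b" "\<lambda>b. bd C f m a b" by (rule dsys_CM)
  have "mu_a C f m a = D.muG"
    unfolding mu_a_def D.muG_def DD_def dD_def zD_def subD_def csub_eq z1_eq ..
  moreover have "limHM C f m a = dlim D.HX D.psi"
    unfolding limHM_def HM_def csub_eq z1_eq ..
  moreover have "HD C f m a = homology D.DL D.DM D.DZ D.DS"
    unfolding HD_def DD_def dD_def zD_def subD_def csub_eq z1_eq ..
  ultimately show ?thesis using D.muG_bij by simp
qed

theorem part3: "bij_betw (mu C f m) (limHL C f m) (HLimL C f m)"
proof -
  interpret D: dsys "\<lambda>b. LL C f b" "\<lambda>b. dL C f m b" by (rule dsys_LL)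
  have "mu C f m = D.muG"
    unfolding mu_def D.muG_def LimL_def dLimL_def zLimL_def subLimL_def fsub_eq z2_eq ..
  moreover have "limHL C f m = dlim D.HX D.psi"
    unfolding limHL_def HL_def fsub_eq z2_eq ..
  moreover have "HLimL C f m = homology D.DL D.DM D.DZ D.DS"
    unfolding HLimL_def LimL_def dLimL_def zLimL_def subLimL_def fsub_eq z2_eq ..
  ultimately show ?thesis using D.muG_bij by simp
qed

end




definition sc :: "'k::field \<Rightarrow> ('c \<Rightarrow> 'k) \<Rightarrow> ('c \<Rightarrow> 'k)" where
  "sc r x = (\<lambda>c. r * x c)"

lemma sc_apply[simp]: "sc r x c = r * x c" by (simp add: sc_def)

interpretation VS: vector_space "sc :: 'k::field \<Rightarrow> ('c \<Rightarrow> 'k) \<Rightarrow> ('c \<Rightarrow> 'k)"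
  by unfold_locales (simp_all add: fun_eq_iff sc_def algebra_simps)

lemma sum_fun_apply: "(\<Sum>i\<in>S. g i) x = (\<Sum>i\<in>S. g i x)"
  by (induction S rule: infinite_finite_induct) simp_all

lemma VS_eq_fin:
  fixes S T :: "('c \<Rightarrow> 'k::field) set"
  assumes S: "VS.subspace S" and T: "VS.subspace T" and ST: "S \<subseteq> T"
    and TB: "T \<subseteq> VS.span B" and B: "finite B" and dim: "VS.dim T \<le> VS.dim S"
  shows "S = T"
proof -
  obtain BS where BS: "BS \<subseteq> S" "VS.independent BS" "S \<subseteq> VS.span BS" "card BS = VS.dim S"
    by (rule VS.basis_exists)
  have "BS \<subseteq> VS.span B" using BS(1) ST TB by blast
  then have fBS: "finite BS" using VS.independent_span_bound[OF B BS(2)] by blast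
  obtain BT where BT: "BS \<subseteq> BT" "BT \<subseteq> T" "VS.independent BT" "T \<subseteq> VS.span BT"
    using VS.maximal_independent_subset_extend[of BS T] BS(1,2) ST by blast
  have "BT \<subseteq> VS.span B" using BT(2) TB by blast
  then have fBT: "finite BT" using VS.independent_span_bound[OF B BT(3)] by blast
  have cBT: "card BT = VS.dim T" using VS.basis_card_eq_dim[OF BT(2,4,3)] .
  have "card BT \<le> card BS" using dim cBT BS(4) by simp
  then have "card BS = card BT" using card_mono[OF fBT BT(1)] by linarith
  then have "BS = BT" by (rule card_subset_eq[OF fBT BT(1)])
  then have "T \<subseteq> VS.span BS" using BT(4) by simp
  also have "\<dots> \<subseteq> S" using VS.span_minimal[OF BS(1) S] .
  finally show ?thesis using ST by blast
qed

context floer begin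

definition delta :: "'c \<Rightarrow> 'c \<Rightarrow> 'k" where "delta c = (\<lambda>c'. if c' = c then 1 else 0)"

lemma CM_span: "CMk a b \<subseteq> VS.span (delta ` Cab C f a b)"
proof
  fix x assume x: "x \<in> CMk a b"
  have "x = (\<Sum>c\<in>Cab C f a b. sc (x c) (delta c))"
  proof (rule ext)
    fix c'
    have "(\<Sum>c\<in>Cab C f a b. sc (x c) (delta c)) c' = (\<Sum>c\<in>Cab C f a b. x c * (if c' = c then 1 else 0))"
      by (simp add: sum_fun_apply delta_def)
    also have "\<dots> = (\<Sum>c\<in>Cab C f a b. if c' = c then x c else 0)"
      by (rule sum.cong) auto
    also have "\<dots> = (if c' \<in> Cab C f a b then x c' else 0)"
      using finite_Cab by (simp add: sum.delta')
    also have "\<dots> = x c'" using CM_out[OF x] by auto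
    finally show "x c' = (\<Sum>c\<in>Cab C f a b. sc (x c) (delta c)) c'" by simp
  qed
  also have "\<dots> \<in> VS.span (delta ` Cab C f a b)"
    by (intro VS.span_sum VS.span_scale VS.span_base) simp
  finally show "x \<in> VS.span (delta ` Cab C f a b)" .
qed

lemma dim_CM: "V \<subseteq> CMk a b \<Longrightarrow> VS.dim V \<le> card (delta ` Cab C f a b)"
  using VS.dim_le_card[of V "delta ` Cab C f a b"] CM_span finite_Cab by blast

lemma CM_eq_sub: "VS.subspace S \<Longrightarrow> VS.subspace T \<Longrightarrow> S \<subseteq> T \<Longrightarrow> T \<subseteq> CMk a b
   \<Longrightarrow> VS.dim T \<le> VS.dim S \<Longrightarrow> S = T"
  using VS_eq_fin[of S T "delta ` Cab C f a b"] CM_span finite_Cab by blast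

lemma prj_add: "prj f a (x + y :: 'c \<Rightarrow> 'k) = prj f a x + prj f a y"
  by (auto simp: fun_eq_iff prj_def)

lemma prj_sc: "prj f a (sc r (x :: 'c \<Rightarrow> 'k)) = sc r (prj f a x)"
  by (auto simp: fun_eq_iff prj_def)

lemma bd_sc: "bd C f m a b (sc r x) = sc r (bd C f m a b x)"
proof (rule ext)
  fix c'
  have "(\<Sum>c\<in>Cab C f a b. m c' c * (r * x c)) = r * (\<Sum>c\<in>Cab C f a b. m c' c * x c)"
    unfolding sum_distrib_left by (rule sum.cong) simp_all
  then show "bd C f m a b (sc r x) c' = sc r (bd C f m a b x) c'" by (simp add: bd_def)
qed

lemma subspace_prj: "VS.subspace W \<Longrightarrow> VS.subspace (prj f a ` (W :: ('c \<Rightarrow> 'k) set))"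
proof -
  assume W: "VS.subspace W"
  show ?thesis unfolding VS.subspace_def
  proof (intro conjI ballI allI)
    show "0 \<in> prj f a ` W" using VS.subspace_0[OF W] prj_0 by (metis image_eqI)
  next
    fix x y assume "x \<in> prj f a ` W" "y \<in> prj f a ` W"
    then obtain x' y' where "x' \<in> W" "y' \<in> W" "x = prj f a x'" "y = prj f a y'" by blast
    then show "x + y \<in> prj f a ` W" using VS.subspace_add[OF W] prj_add by (metis image_eqI)
  next
    fix r x assume "x \<in> prj f a ` W"
    then obtain x' where "x' \<in> W" "x = prj f a x'" by blast
    then show "sc r x \<in> prj f a ` W" using VS.subspace_scale[OF W] prj_sc by (metis image_eqI)
  qed
qed

end




locale mlsys = floer C f m for C :: "'c set" and f and m :: "'c \<Rightarrow> 'c \<Rightarrow> 'k::field" +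
  fixes b :: real and T W :: "real \<Rightarrow> ('c \<Rightarrow> 'k) set"
  assumes Tne: "T a \<noteq> {}"
    and Wsub: "VS.subspace (W a)"
    and WCM: "W a \<subseteq> CMk a b"
    and aff: "t \<in> T a \<Longrightarrow> u \<in> T a \<longleftrightarrow> u - t \<in> W a"
    and Tcomp: "a1 \<le> a2 \<Longrightarrow> t \<in> T a1 \<Longrightarrow> prj f a2 t \<in> T a2"
    and TCM: "T a \<subseteq> CMk a b"
begin

lemma Wcomp: assumes "a1 \<le> a2" "w \<in> W a1" shows "prj f a2 w \<in> W a2"
proof -
  obtain t where t: "t \<in> T a1" using Tne by blast
  have "t + w \<in> T a1" using aff[OF t] assms(2) by simp
  then have "prj f a2 (t + w) \<in> T a2" "prj f a2 t \<in> T a2" using Tcomp assms(1) t by auto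
  then have "prj f a2 (t + w) - prj f a2 t \<in> W a2" using aff by blast
  then show ?thesis by (simp add: prj_add)
qed

definition "I a a' = prj f a ` T a'"
definition "J a a' = prj f a ` W a'"

lemma J_sub: "VS.subspace (J a a')" unfolding J_def by (rule subspace_prj[OF Wsub])

lemma J_CM: "J a a' \<subseteq> CMk a b" unfolding J_def using WCM prj_CM by blast

lemma J_mono: assumes "a'' \<le> a'" "a' \<le> a" shows "J a a'' \<subseteq> J a a'"
proof
  fix u assume "u \<in> J a a''"
  then obtain w where w: "w \<in> W a''" "u = prj f a w" unfolding J_def by blast
  have "u = prj f a (prj f a' w)" using w prj_prj[OF assms(2)] by simp
  moreover have "prj f a' w \<in> W a'" using Wcomp[OF assms(1) w(1)] .
  ultimately show "u \<in> J a a'" unfolding J_def by blast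
qed

lemma I_mono: assumes "a'' \<le> a'" "a' \<le> a" shows "I a a'' \<subseteq> I a a'"
proof
  fix u assume "u \<in> I a a''"
  then obtain w where w: "w \<in> T a''" "u = prj f a w" unfolding I_def by blast
  have "u = prj f a (prj f a' w)" using w prj_prj[OF assms(2)] by simp
  moreover have "prj f a' w \<in> T a'" using Tcomp[OF assms(1) w(1)] .
  ultimately show "u \<in> I a a'" unfolding I_def by blast
qed

lemma I_ne: "I a a' \<noteq> {}" unfolding I_def using Tne by blast

lemma I_coset: assumes u0: "u0 \<in> I a a'" shows "u \<in> I a a' \<longleftrightarrow> u - u0 \<in> J a a'"
proof -
  obtain t0 where t0: "t0 \<in> T a'" "u0 = prj f a t0" using u0 unfolding I_def by blast
  show ?thesis
  proof
    assume "u \<in> I a a'"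
    then obtain t where t: "t \<in> T a'" "u = prj f a t" unfolding I_def by blast
    have "t - t0 \<in> W a'" using aff[OF t0(1)] t(1) by blast
    moreover have "u - u0 = prj f a (t - t0)" using t t0 by (simp add: prj_diff)
    ultimately show "u - u0 \<in> J a a'" unfolding J_def by blast
  next
    assume "u - u0 \<in> J a a'"
    then obtain w where w: "w \<in> W a'" "u - u0 = prj f a w" unfolding J_def by blast
    have "t0 + w \<in> T a'" using aff[OF t0(1)] w(1) by simp
    moreover have "u = prj f a (t0 + w)" using w t0 by (simp add: prj_add algebra_simps)
    ultimately show "u \<in> I a a'" unfolding I_def by blast
  qed
qed

lemma stab: "\<exists>a0 \<le> a. \<forall>a' \<le> a0. I a a' = I a a0"
proof -
  define P where "P n \<longleftrightarrow> (\<exists>a'. a' \<le> a \<and> VS.dim (J a a') = n)" for n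
  have "P (VS.dim (J a a))" unfolding P_def by blast
  then have "P (LEAST n. P n)" by (rule LeastI)
  then obtain a0 where a0: "a0 \<le> a" "VS.dim (J a a0) = (LEAST n. P n)" unfolding P_def by blast
  have "I a a' = I a a0" if a': "a' \<le> a0" for a'
  proof -
    have Jsub: "J a a' \<subseteq> J a a0" using J_mono[OF a' a0(1)] .
    have "a' \<le> a" using a' a0(1) by simp
    then have "P (VS.dim (J a a'))" unfolding P_def by blast
    then have "VS.dim (J a a0) \<le> VS.dim (J a a')" unfolding a0(2) by (rule Least_le)
    then have Jeq: "J a a' = J a a0" using CM_eq_sub[OF J_sub J_sub Jsub J_CM] by blast
    obtain u0 where u0: "u0 \<in> I a a'" using I_ne by blast
    have u0': "u0 \<in> I a a0" using I_mono[OF a' a0(1)] u0 by blast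
    show ?thesis
    proof (rule set_eqI)
      fix u show "u \<in> I a a' \<longleftrightarrow> u \<in> I a a0"
        using I_coset[OF u0, of u] I_coset[OF u0', of u] Jeq by simp
    qed
  qed
  then show ?thesis using a0(1) by blast
qed

definition "a0 a = (SOME a0. a0 \<le> a \<and> (\<forall>a' \<le> a0. I a a' = I a a0))"

lemma a0_prop: "a0 a \<le> a \<and> (\<forall>a' \<le> a0 a. I a a' = I a (a0 a))"
  unfolding a0_def by (rule someI_ex[OF stab])

lemma a0: "a0 a \<le> a" "a' \<le> a0 a \<Longrightarrow> I a a' = I a (a0 a)"
proof -
  show "a0 a \<le> a" using a0_prop by (rule conjunct1)
  assume h: "a' \<le> a0 a"
  have "\<forall>a' \<le> a0 a. I a a' = I a (a0 a)" using a0_prop by (rule conjunct2)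
  then show "I a a' = I a (a0 a)" using h by (elim allE impE)
qed

definition "S a = I a (a0 a)"

lemma S_ne: "S a \<noteq> {}" unfolding S_def by (rule I_ne)

lemma S_T: "S a \<subseteq> T a" unfolding S_def I_def using Tcomp[OF a0(1)] by blast

lemma S_lift: assumes "a2 \<le> a1" "y \<in> S a1" shows "\<exists>y'\<in>S a2. prj f a1 y' = y"
proof -
  define a' where "a' = min (a0 a1) (a0 a2)"
  have le1: "a' \<le> a0 a1" and le2: "a' \<le> a0 a2" unfolding a'_def by auto
  have "y \<in> I a1 a'" using assms(2) a0(2)[OF le1] unfolding S_def by simp
  then obtain t where t: "t \<in> T a'" "y = prj f a1 t" unfolding I_def by blast
  have "prj f a2 t \<in> I a2 a'" unfolding I_def using t(1) by blast
  then have "prj f a2 t \<in> S a2" using a0(2)[OF le2] unfolding S_def by simp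
  moreover have "prj f a1 (prj f a2 t) = y" using prj_prj[OF assms(1)] t(2) by simp
  ultimately show ?thesis by blast
qed

definition an :: "nat \<Rightarrow> real" where "an n = b - real n"

primrec Y :: "nat \<Rightarrow> 'c \<Rightarrow> 'k" where
  "Y 0 = (SOME y. y \<in> S (an 0))"
| "Y (Suc n) = (SOME y'. y' \<in> S (an (Suc n)) \<and> prj f (an n) y' = Y n)"

lemma Y_S: "Y n \<in> S (an n) \<and> (n > 0 \<longrightarrow> prj f (an (n - 1)) (Y n) = Y (n - 1))"
proof (induction n)
  case 0
  show ?case using S_ne by (simp add: some_in_eq)
next
  case (Suc n)
  have "an (Suc n) \<le> an n" by (simp add: an_def)
  then have ex: "\<exists>y'. y' \<in> S (an (Suc n)) \<and> prj f (an n) y' = Y n" using S_lift Suc.IH by blast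
  show ?case using someI_ex[OF ex] by simp
qed

lemma Y_T: "Y n \<in> T (an n)" using Y_S S_T by blast

lemma Y_compat: "n \<le> k \<Longrightarrow> prj f (an n) (Y k) = Y n"
proof (induction k rule: dec_induct)
  case base
  show ?case using Y_T TCM prj_id by blast
next
  case (step k)
  have "an k \<le> an n" using step.hyps(1) by (simp add: an_def)
  then have "prj f (an n) (Y (Suc k)) = prj f (an n) (prj f (an k) (Y (Suc k)))" by (simp add: prj_prj)
  also have "prj f (an k) (Y (Suc k)) = Y k" using Y_S[of "Suc k"] by simp
  finally show ?case using step.IH by simp
qed

definition N :: "real \<Rightarrow> nat" where "N a = nat \<lceil>b - a\<rceil>"

lemma an_N: "an (N a) \<le> a"
  unfolding an_def N_def by linarith

lemma N_mono: "a1 \<le> a2 \<Longrightarrow> N a2 \<le> N a1"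
  unfolding N_def by (intro nat_mono ceiling_mono) simp

definition "yy a = prj f a (Y (N a))"

theorem ml_exists: "\<exists>y\<in>LLk b. \<forall>a. y a \<in> T a"
proof (intro bexI allI)
  show "yy a \<in> T a" for a unfolding yy_def using Tcomp[OF an_N Y_T] .
  show "yy \<in> LLk b" unfolding LL_iff
  proof (intro conjI allI impI)
    show "yy a \<in> CMk a b" for a unfolding yy_def using Y_T TCM prj_CM by blast
    fix a1 a2 :: real assume a: "a1 \<le> a2"
    have "prj f a2 (yy a1) = prj f a2 (Y (N a1))" unfolding yy_def using prj_prj[OF a] by simp
    also have "\<dots> = prj f a2 (prj f (an (N a2)) (Y (N a1)))" using prj_prj[OF an_N] by simp
    also have "\<dots> = yy a2" unfolding yy_def using Y_compat[OF N_mono[OF a]] by simp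
    finally show "prj f a2 (yy a1) = yy a2" .
  qed
qed

end




context floer begin

abbreviation "hcA a b \<equiv> hclass (CMk a b) (bd C f m a b) 0 minus"
abbreviation "ZA a b \<equiv> cycles (CMk a b) (bd C f m a b) 0"
abbreviation "BA a b \<equiv> bd C f m a b ` CMk a b"
abbreviation "HA a b \<equiv> homology (CMk a b) (bd C f m a b) 0 minus"

lemma bd_bd: "bd C f m a b (bd C f m a b x) = 0"
proof (rule ext)
  fix c'
  show "bd C f m a b (bd C f m a b x) c' = 0 c'"
  proof (cases "c' \<in> Cab C f a b")
    case False then show ?thesis by (simp add: bd_def)
  next
    case True
    have inner: "(\<Sum>c\<in>Cab C f a b. m c' c * m c c2) = 0" if c2: "c2 \<in> Cab C f a b" for c2
    proof -
      let ?N = "{c\<in>C. m c' c * m c c2 \<noteq> 0}"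
      have sub: "?N \<subseteq> Cab C f a b"
      proof
        fix c assume "c \<in> ?N"
        then have "c \<in> C" "m c' c \<noteq> 0" "m c c2 \<noteq> 0" by auto
        then have "f c' < f c" "f c < f c2" using m_lt True c2 by (auto simp: Cab_def)
        then show "c \<in> Cab C f a b" using True c2 \<open>c \<in> C\<close> by (auto simp: Cab_def)
      qed
      have "(\<Sum>c\<in>?N. m c' c * m c c2) = (\<Sum>c\<in>Cab C f a b. m c' c * m c c2)"
        by (rule sum.mono_neutral_left[OF finite_Cab sub]) (auto simp: Cab_def)
      moreover have "(\<Sum>c\<in>?N. m c' c * m c c2) = 0"
        using ft True c2 by (simp add: floer_triple_def Cab_def)
      ultimately show ?thesis by simp
    qed
    have "bd C f m a b (bd C f m a b x) c' =
        (\<Sum>c\<in>Cab C f a b. m c' c * (\<Sum>c2\<in>Cab C f a b. m c c2 * x c2))"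
      using True by (simp add: bd_def)
    also have "\<dots> = (\<Sum>c\<in>Cab C f a b. \<Sum>c2\<in>Cab C f a b. m c' c * m c c2 * x c2)"
      by (simp add: sum_distrib_left mult.assoc)
    also have "\<dots> = (\<Sum>c2\<in>Cab C f a b. \<Sum>c\<in>Cab C f a b. m c' c * m c c2 * x c2)"
      by (rule sum.swap)
    also have "\<dots> = (\<Sum>c2\<in>Cab C f a b. (\<Sum>c\<in>Cab C f a b. m c' c * m c c2) * x c2)"
      by (simp add: sum_distrib_right)
    also have "\<dots> = 0" using inner by simp
    finally show ?thesis by simp
  qed
qed

lemma CM_add: "x \<in> CMk a b \<Longrightarrow> y \<in> CMk a b \<Longrightarrow> x + y \<in> CMk a b"
  using cplx.Vadd[OF cplx_CM] by blast

lemma CM_sc: "x \<in> CMk a b \<Longrightarrow> sc r x \<in> CMk a b"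
  by (auto simp: CM_iff)

lemma ZA_iff: "z \<in> ZA a b \<longleftrightarrow> z \<in> CMk a b \<and> bd C f m a b z = 0"
  by (simp add: cycles_def)

lemma prj_Z: assumes a: "a1 \<le> a2" and z: "z \<in> ZA a1 b" shows "prj f a2 z \<in> ZA a2 b"
proof -
  have z': "z \<in> CMk a1 b" "bd C f m a1 b z = 0" using z ZA_iff by auto
  have "bd C f m a2 b (prj f a2 z) = 0" using bd_prj[OF z'(1) a] z'(2) prj_0 by simp
  then show ?thesis using ZA_iff prj_CM[OF z'(1)] by blast
qed

lemma prj_B: assumes "a1 \<le> a2" "u \<in> BA a1 b" shows "prj f a2 u \<in> BA a2 b"
proof -
  obtain y where y: "y \<in> CMk a1 b" "u = bd C f m a1 b y" using assms(2) by blast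
  then have "prj f a2 u = bd C f m a2 b (prj f a2 y)" using bd_prj[OF y(1) assms(1)] by simp
  moreover have "prj f a2 y \<in> CMk a2 b" using prj_CM[OF y(1)] .
  ultimately show ?thesis by blast
qed

lemma hmap_prj: assumes a: "a1 \<le> a2" and c: "c \<in> HA a1 b" and z: "z \<in> c"
  shows "hmap (CMk a2 b) (bd C f m a2 b) 0 minus (prj f a2) c = hcA a2 b (prj f a2 z)"
proof -
  let ?r = "SOME z. z \<in> c"
  have r: "?r \<in> c" using cplx.H_some(1)[OF cplx_CM c] .
  have rz: "?r \<in> ZA a1 b" "z \<in> ZA a1 b" using cplx.H_memb(2)[OF cplx_CM c] r z by auto
  have "hcA a1 b ?r = hcA a1 b z" using cplx.H_memb(1)[OF cplx_CM c] r z by simp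
  then have "?r - z \<in> BA a1 b" using cplx.hc_eq[OF cplx_CM rz] by simp
  then have "prj f a2 (?r - z) \<in> BA a2 b" by (rule prj_B[OF a])
  then have "prj f a2 ?r - prj f a2 z \<in> BA a2 b" by (simp only: prj_diff)
  then have "hcA a2 b (prj f a2 ?r) = hcA a2 b (prj f a2 z)"
    using cplx.hc_eq[OF cplx_CM prj_Z[OF a rz(1)] prj_Z[OF a rz(2)]] by simp
  then show ?thesis by (simp add: hmap_def)
qed

lemma subspace_Zero: "VS.subspace {y \<in> CMk a b. bd C f m a b y = 0}"
  unfolding VS.subspace_def
  by (auto simp: CM_0 CM_add CM_sc bd_sc cplx.dadd[OF cplx_CM] cplx.d0[OF cplx_CM])

lemma subspace_B: "VS.subspace (BA a b)"
  unfolding VS.subspace_def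
proof (intro conjI ballI allI)
  show "0 \<in> BA a b" using cplx.B0[OF cplx_CM] .
  show "x + y \<in> BA a b" if "x \<in> BA a b" "y \<in> BA a b" for x y using cplx.Badd[OF cplx_CM] that by blast
  show "sc r x \<in> BA a b" if hyp: "x \<in> BA a b" for r x
  proof -
    obtain y where "y \<in> CMk a b" "x = bd C f m a b y" using hyp by blast
    then have "sc r y \<in> CMk a b" "sc r x = bd C f m a b (sc r y)" by (simp_all add: CM_sc bd_sc)
    then show ?thesis by blast
  qed
qed

theorem part2: "bij_betw (nu C f m b) (HL C f m b) (ilimHM C f m b)"
proof -
  interpret L: cplx "LLk b" "dL C f m b" by (rule cplx_LL)
  have nu_eq: "nu C f m b c = (\<lambda>a. hcA a b ((SOME z. z \<in> c) a))" for c
    unfolding nu_def Let_def csub_eq z1_eq ..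
  have HL_eq: "HL C f m b = L.H" unfolding HL_def fsub_eq z2_eq ..
  have ilim_eq: "ilimHM C f m b = ilim (\<lambda>a. HA a b) (\<lambda>a1 a2. hmap (CMk a2 b) (bd C f m a2 b) 0 minus (prj f a2))"
    unfolding ilimHM_def HM_def csub_eq z1_eq ..
  have ZL: "x \<in> L.Z \<longleftrightarrow> x \<in> LLk b \<and> (\<forall>a. x a \<in> ZA a b)" for x
    by (auto simp: L.Z_iff ZA_iff LL_iff dL_def fun_eq_iff)
  have dLeq: "dL C f m b y = x \<longleftrightarrow> (\<forall>a. bd C f m a b (y a) = x a)" for x y
    unfolding dL_def
  proof
    assume "(\<lambda>a. bd C f m a b (y a)) = x" then show "\<forall>a. bd C f m a b (y a) = x a" by auto
  next
    assume "\<forall>a. bd C f m a b (y a) = x a" then show "(\<lambda>a. bd C f m a b (y a)) = x" by (intro ext) simp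
  qed
  have BL: "x \<in> dL C f m b ` LLk b \<longleftrightarrow> (\<exists>y \<in> LLk b. \<forall>a. bd C f m a b (y a) = x a)" for x
    unfolding dLeq[symmetric] by blast
  have nu_in: "nu C f m b c \<in> ilimHM C f m b" if c: "c \<in> L.H" for c
  proof -
    define x where "x = (SOME z. z \<in> c)"
    have x: "x \<in> L.Z" unfolding x_def using L.H_some(2)[OF c] .
    then have xL: "x \<in> LLk b" and xa: "\<And>a. x a \<in> ZA a b" using ZL by auto
    have "hmap (CMk a2 b) (bd C f m a2 b) 0 minus (prj f a2) (hcA a1 b (x a1)) = hcA a2 b (x a2)"
      if a: "a1 \<le> a2" for a1 a2
    proof -
      have "hmap (CMk a2 b) (bd C f m a2 b) 0 minus (prj f a2) (hcA a1 b (x a1)) = hcA a2 b (prj f a2 (x a1))"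
        by (rule hmap_prj[OF a cplx.H_mem[OF cplx_CM xa] cplx.hc_self[OF cplx_CM xa]])
      also have "prj f a2 (x a1) = x a2" using xL a by (simp add: LL_iff)
      finally show ?thesis .
    qed
    then show ?thesis unfolding nu_eq ilim_eq x_def[symmetric] ilim_def
      using cplx.H_mem[OF cplx_CM xa] by auto
  qed
  show ?thesis
  proof (rule bij_betw_imageI)
    show "inj_on (nu C f m b) (HL C f m b)"
    proof (rule inj_onI)
      fix c1 c2 assume c1: "c1 \<in> HL C f m b" and c2: "c2 \<in> HL C f m b" and eq: "nu C f m b c1 = nu C f m b c2"
      have c1': "c1 \<in> L.H" and c2': "c2 \<in> L.H" using c1 c2 HL_eq by auto
      define x1 where "x1 = (SOME z. z \<in> c1)"
      define x2 where "x2 = (SOME z. z \<in> c2)"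
      have x1: "x1 \<in> L.Z" unfolding x1_def using L.H_some(2)[OF c1'] .
      have x2: "x2 \<in> L.Z" unfolding x2_def using L.H_some(2)[OF c2'] .
      have x1L: "x1 \<in> LLk b" and x1a: "\<And>a. x1 a \<in> ZA a b" using x1 ZL by auto
      have x2L: "x2 \<in> LLk b" and x2a: "\<And>a. x2 a \<in> ZA a b" using x2 ZL by auto
      have "hcA a b (x1 a) = hcA a b (x2 a)" for a
        using fun_cong[OF eq, of a] unfolding nu_eq x1_def[symmetric] x2_def[symmetric] .
      then have diffB: "x1 a - x2 a \<in> BA a b" for a using cplx.hc_eq[OF cplx_CM x1a x2a] by simp
      define T where "T a = {y \<in> CMk a b. bd C f m a b y = x1 a - x2 a}" for a
      define W where "W a = {y \<in> CMk a b. bd C f m a b y = 0}" for a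
      interpret M: mlsys C f m b T W
      proof
        show "T a \<noteq> {}" for a using diffB[of a] unfolding T_def by force
        show "VS.subspace (W a)" for a unfolding W_def by (rule subspace_Zero)
        show "W a \<subseteq> CMk a b" for a unfolding W_def by blast
        show "T a \<subseteq> CMk a b" for a unfolding T_def by blast
        show "u \<in> T a \<longleftrightarrow> u - t \<in> W a" if "t \<in> T a" for t a u
        proof -
          have t: "t \<in> CMk a b" "bd C f m a b t = x1 a - x2 a" using that unfolding T_def by auto
          have "u \<in> CMk a b \<longleftrightarrow> u - t \<in> CMk a b"
            using CM_diff[OF _ t(1), of u] CM_add[OF _ t(1), of "u - t"] by auto
          then show ?thesis unfolding T_def W_def using t bd_diff[of a b u t] by auto
        qed
        show "prj f a2 t \<in> T a2" if "a1 \<le> a2" "t \<in> T a1" for a1 a2 t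
        proof -
          have t: "t \<in> CMk a1 b" "bd C f m a1 b t = x1 a1 - x2 a1" using that(2) unfolding T_def by auto
          have "bd C f m a2 b (prj f a2 t) = prj f a2 (x1 a1 - x2 a1)" using bd_prj[OF t(1) that(1)] t(2) by simp
          also have "\<dots> = x1 a2 - x2 a2" using x1L x2L that(1) by (simp add: prj_diff LL_iff)
          finally show ?thesis unfolding T_def using prj_CM[OF t(1)] by blast
        qed
      qed
      obtain y where y: "y \<in> LLk b" "\<And>a. y a \<in> T a" using M.ml_exists by blast
      then have "x1 - x2 \<in> dL C f m b ` LLk b" unfolding BL T_def by auto
      then have "L.hc x1 = L.hc x2" using L.hc_eq[OF x1 x2] by simp
      then show "c1 = c2" using L.H_some(3)[OF c1'] L.H_some(3)[OF c2'] unfolding x1_def x2_def by simp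
    qed
  next
    show "nu C f m b ` HL C f m b = ilimHM C f m b"
    proof (rule set_eqI, rule iffI)
      fix h assume "h \<in> nu C f m b ` HL C f m b"
      then show "h \<in> ilimHM C f m b" using nu_in HL_eq by auto
    next
      fix h assume "h \<in> ilimHM C f m b"
      then have hA: "\<And>a. h a \<in> HA a b"
        and hc: "\<And>a1 a2. a1 \<le> a2 \<Longrightarrow> hmap (CMk a2 b) (bd C f m a2 b) 0 minus (prj f a2) (h a1) = h a2"
        unfolding ilim_eq ilim_def by auto
      interpret M: mlsys C f m b h "\<lambda>a. BA a b"
      proof
        show "h a \<noteq> {}" for a using cplx.H_some(1)[OF cplx_CM hA] by blast
        show "VS.subspace (BA a b)" for a by (rule subspace_B)
        show "BA a b \<subseteq> CMk a b" for a using bd_CM by blast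
        show "h a \<subseteq> CMk a b" for a using cplx.H_memb(2)[OF cplx_CM hA] ZA_iff by blast
        show "u \<in> h a \<longleftrightarrow> u - t \<in> BA a b" if "t \<in> h a" for t a u
        proof -
          have ht: "h a = hcA a b t" using cplx.H_memb(1)[OF cplx_CM hA that] by simp
          have t: "t \<in> ZA a b" using cplx.H_memb(2)[OF cplx_CM hA that] .
          have "u \<in> ZA a b" if hyp: "u - t \<in> BA a b"
          proof -
            obtain y where y: "y \<in> CMk a b" "u - t = bd C f m a b y" using hyp by blast
            have tt: "t \<in> CMk a b" "bd C f m a b t = 0" using t ZA_iff by auto
            have u: "u = bd C f m a b y + t" using y(2) by (simp add: algebra_simps)
            have "u \<in> CMk a b" unfolding u using CM_add[OF bd_CM tt(1)] .
            moreover have "bd C f m a b u = 0"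
              unfolding u using cplx.dadd[OF cplx_CM bd_CM tt(1)] tt(2) bd_bd by simp
            ultimately show ?thesis using ZA_iff by blast
          qed
          then show ?thesis unfolding ht using cplx.hc_iff[OF cplx_CM] by blast
        qed
        show "prj f a2 t \<in> h a2" if "a1 \<le> a2" "t \<in> h a1" for a1 a2 t
        proof -
          have "h a2 = hcA a2 b (prj f a2 t)" using hc[OF that(1)] hmap_prj[OF that(1) hA that(2)] by simp
          moreover have "prj f a2 t \<in> ZA a2 b" using prj_Z[OF that(1) cplx.H_memb(2)[OF cplx_CM hA that(2)]] .
          ultimately show ?thesis using cplx.hc_self[OF cplx_CM] by simp
        qed
      qed
      obtain x where x: "x \<in> LLk b" "\<And>a. x a \<in> h a" using M.ml_exists by blast
      have xa: "x a \<in> ZA a b" for a using cplx.H_memb(2)[OF cplx_CM hA x(2)] .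
      have xZ: "x \<in> L.Z" using ZL x(1) xa by blast
      define c where "c = L.hc x"
      have cH: "c \<in> L.H" unfolding c_def by (rule L.H_mem[OF xZ])
      define x' where "x' = (SOME z. z \<in> c)"
      have "x' \<in> c" unfolding x'_def by (rule L.H_some(1)[OF cH])
      then have x'c: "x' \<in> L.Z" "x' - x \<in> dL C f m b ` LLk b" unfolding c_def using L.hc_iff by auto
      then obtain y where y: "y \<in> LLk b" "\<And>a. bd C f m a b (y a) = x' a - x a" unfolding BL by auto
      have x'a: "x' a \<in> ZA a b" for a using x'c(1) ZL by auto
      have "hcA a b (x' a) = h a" for a
      proof -
        have "y a \<in> CMk a b" using y(1) LL_iff by auto
        then have "x' a - x a \<in> BA a b" using y(2)[of a] by (metis image_eqI)
        then have "hcA a b (x' a) = hcA a b (x a)" using cplx.hc_eq[OF cplx_CM x'a xa] by simp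
        also have "\<dots> = h a" using cplx.H_memb(1)[OF cplx_CM hA x(2)] .
        finally show ?thesis .
      qed
      then have "nu C f m b c = h" unfolding nu_eq x'_def[symmetric] by (simp add: fun_eq_iff)
      moreover have "c \<in> HL C f m b" using cH HL_eq by simp
      ultimately show "h \<in> nu C f m b ` HL C f m b" by blast
    qed
  qed
qed

end


theorem mainTheorem6:
  fixes C :: "'c set" and f :: "'c \<Rightarrow> real" and m :: "'c \<Rightarrow> 'c \<Rightarrow> 'k::field"
  assumes "floer_triple C f m"
  shows "(\<forall>a. bij_betw (mu_a C f m a) (limHM C f m a) (HD C f m a))
       \<and> (\<forall>b. bij_betw (nu C f m b) (HL C f m b) (ilimHM C f m b))
       \<and> bij_betw (mu C f m) (limHL C f m) (HLimL C f m)"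
proof -
  interpret F: floer C f m using assms by (simp add: floer_def)
  show ?thesis using F.part1 F.part2 F.part3 by blast
qed

end
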